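(* The space $X_{\mathrm{crs}}$ is contractible.
   Context: Let $X$ be the following 2-dimensional CW-complex. Its 0-cells are $e_n^0$, $n\ge 0$; the point $x=e_0^0$ is called the origin. For each $n\ge1$ there are two 1-cells $e_n^1, e_{-n}^1$, each joining $x$ to $e_n^0$, so that $e_0^0\cup e_n^0\cup e_n^1\cup e_{-n}^1$ is homeomorphic to a circle; for each $n\ge1$ a 2-cell $e_n^2$ is attached via a homeomorphism $\varphi_n:S^1\to e_0^0\cup e_n^0\cup e_n^1\cup e_{-n}^1$. Thus each closed 2-cell $\overline{e_n^2}$ is a closed disk having $x$ and $e_n^0$ on its boundary, and $X$ is a wedge at $x$ of countably many closed disks, carrying the CW (weak) topology. The coarser topology on the set $X$ consists of all subsets $U\subset X$ that are open in the CW-topology and either do not contain $x$, or contain $\overline{e_n^2}\smallsetminus e_n^0$ for all but finitely many $n\ge1$. The set $X$ with this coarser topology is denoted $X_{\mathrm{crs}}$. *)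

theory Defs
  imports "HOL-Analysis.Analysis"
begin

text \<open>Model of the wedge X of countably many closed disks.
  The n-th closed disk (n >= 1) is a copy of the closed unit disk cball 0 1 in the complex plane;
  its boundary point 1 is glued to the common origin x, and its boundary point -1 is the 0-cell e_n^0.
  The two open boundary arcs (upper and lower half of the unit circle) are the 1-cells e_n^1, e_{-n}^1.
  Points of X are represented as pairs (n, z) with n >= 1, |z| <= 1, z ~= 1, together with the
  origin, represented as (0, 1).\<close>

definition X_origin :: "nat \<times> complex" where
  "X_origin = (0, 1)"

definition X_set :: "(nat \<times> complex) set" where
  "X_set = insert X_origin {(n, z). n \<ge> 1 \<and> z \<in> cball 0 1 \<and> z \<noteq> 1}"

definition disk_map :: "nat \<Rightarrow> complex \<Rightarrow> nat \<times> complex" where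
  "disk_map n z = (if z = 1 then X_origin else (n, z))"

definition cw_open :: "(nat \<times> complex) set \<Rightarrow> bool" where
  "cw_open U \<longleftrightarrow> U \<subseteq> X_set \<and>
     (\<forall>n\<ge>1. openin (top_of_set (cball (0::complex) 1)) {z \<in> cball 0 1. disk_map n z \<in> U})"

definition crs_open :: "(nat \<times> complex) set \<Rightarrow> bool" where
  "crs_open U \<longleftrightarrow> cw_open U \<and>
     (X_origin \<notin> U \<or>
      finite {n::nat. n \<ge> 1 \<and> \<not> (disk_map n ` (cball 0 1 - {-1}) \<subseteq> U)})"

definition X_crs :: "(nat \<times> complex) topology" where
  "X_crs = topology crs_open"

end

theory Submission
  imports Defs
begin


lemma istop_crs: "istopology crs_open"
  unfolding istopology_def
proof (intro conjI allI impI)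
  fix S T assume S: "crs_open S" and T: "crs_open T"
  have cw: "cw_open (S \<inter> T)"
    unfolding cw_open_def
  proof (intro conjI allI impI)
    show "S \<inter> T \<subseteq> X_set" using S T unfolding crs_open_def cw_open_def by blast
    fix n :: nat assume n: "n \<ge> 1"
    have "{z \<in> cball 0 1. disk_map n z \<in> S \<inter> T} = {z \<in> cball 0 1. disk_map n z \<in> S} \<inter> {z \<in> cball 0 1. disk_map n z \<in> T}"
      by auto
    moreover have "openin (top_of_set (cball (0::complex) 1)) ({z \<in> cball 0 1. disk_map n z \<in> S} \<inter> {z \<in> cball 0 1. disk_map n z \<in> T})"
      using S T n unfolding crs_open_def cw_open_def by (intro openin_Int) auto
    ultimately show "openin (top_of_set (cball (0::complex) 1)) {z \<in> cball 0 1. disk_map n z \<in> S \<inter> T}"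
      by simp
  qed
  show "crs_open (S \<inter> T)"
  proof (cases "X_origin \<in> S \<inter> T")
    case True
    then have "finite {n::nat. n \<ge> 1 \<and> \<not> (disk_map n ` (cball 0 1 - {-1}) \<subseteq> S)}"
              "finite {n::nat. n \<ge> 1 \<and> \<not> (disk_map n ` (cball 0 1 - {-1}) \<subseteq> T)}"
      using S T unfolding crs_open_def by auto
    then have "finite ({n::nat. n \<ge> 1 \<and> \<not> (disk_map n ` (cball 0 1 - {-1}) \<subseteq> S)} \<union>
                       {n::nat. n \<ge> 1 \<and> \<not> (disk_map n ` (cball 0 1 - {-1}) \<subseteq> T)})" by simp
    then have "finite {n::nat. n \<ge> 1 \<and> \<not> (disk_map n ` (cball 0 1 - {-1}) \<subseteq> S \<inter> T)}"
      by (rule finite_subset[rotated]) auto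
    then show ?thesis using cw unfolding crs_open_def by blast
  qed (use cw crs_open_def in blast)
next
  fix K assume K: "\<forall>k\<in>K. crs_open k"
  have cw: "cw_open (\<Union>K)"
    unfolding cw_open_def
  proof (intro conjI allI impI)
    show "\<Union>K \<subseteq> X_set" using K unfolding crs_open_def cw_open_def by blast
    fix n :: nat assume n: "n \<ge> 1"
    have "{z \<in> cball 0 1. disk_map n z \<in> \<Union>K} = \<Union>((\<lambda>k. {z \<in> cball 0 1. disk_map n z \<in> k}) ` K)"
      by auto
    moreover have "openin (top_of_set (cball (0::complex) 1)) (\<Union>((\<lambda>k. {z \<in> cball 0 1. disk_map n z \<in> k}) ` K))"
      using K n unfolding crs_open_def cw_open_def by (intro openin_Union) auto
    ultimately show "openin (top_of_set (cball (0::complex) 1)) {z \<in> cball 0 1. disk_map n z \<in> \<Union>K}"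
      by simp
  qed
  show "crs_open (\<Union>K)"
  proof (cases "X_origin \<in> \<Union>K")
    case True
    then obtain k where k: "k \<in> K" "X_origin \<in> k" by blast
    then have "finite {n::nat. n \<ge> 1 \<and> \<not> (disk_map n ` (cball 0 1 - {-1}) \<subseteq> k)}"
      using K unfolding crs_open_def by auto
    then have "finite {n::nat. n \<ge> 1 \<and> \<not> (disk_map n ` (cball 0 1 - {-1}) \<subseteq> \<Union>K)}"
      by (rule finite_subset[rotated]) (use k in auto)
    then show ?thesis using cw unfolding crs_open_def by blast
  qed (use cw crs_open_def in blast)
qed

lemma openin_crs: "openin X_crs = crs_open"
  by (simp add: X_crs_def istop_crs)

lemma crs_X_set: "crs_open X_set"
proof -
  have "{z \<in> cball 0 1. disk_map n z \<in> X_set} = cball 0 1" if "n \<ge> 1" for n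
    using that unfolding disk_map_def X_set_def by auto
  moreover have "disk_map n ` (cball 0 1 - {-1}) \<subseteq> X_set" if "n \<ge> 1" for n
    using that unfolding disk_map_def X_set_def by auto
  moreover have "X_origin \<in> X_set" by (simp add: X_set_def)
  moreover have "{n::nat. n \<ge> 1 \<and> \<not> (disk_map n ` (cball 0 1 - {-1}) \<subseteq> X_set)} = {}"
    using calculation(2) by blast
  ultimately show ?thesis unfolding crs_open_def cw_open_def
    by (metis (no_types, lifting) finite.emptyI openin_topspace topspace_euclidean_subtopology order_refl)
qed

lemma topspace_crs: "topspace X_crs = X_set"
proof -
  have "\<Union>{U. crs_open U} = X_set"
    using crs_X_set unfolding crs_open_def cw_open_def by blast
  then show ?thesis by (simp add: topspace_def openin_crs)
qed



definition fm :: "complex \<Rightarrow> real \<Rightarrow> complex" where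
  "fm z t = (1 - of_real t) * z + of_real t"

lemma norm_1m: "t \<le> 1 \<Longrightarrow> norm (1 - complex_of_real t) = 1 - t"
  by (metis abs_of_nonneg diff_ge_0_iff_ge norm_of_real of_real_1 of_real_diff)

lemma fm_cball: assumes "norm z \<le> 1" "0 \<le> t" "t \<le> 1" shows "norm (fm z t) \<le> 1"
proof -
  have "norm (fm z t) \<le> norm ((1 - of_real t) * z) + norm (of_real t :: complex)"
    unfolding fm_def by (rule norm_triangle_ineq)
  also have "\<dots> = (1 - t) * norm z + t"
  proof -
    show ?thesis using assms by (simp add: norm_mult norm_1m)
  qed
  also have "\<dots> \<le> (1 - t) * 1 + t" using assms by (intro add_mono mult_left_mono) auto
  finally show ?thesis by simp
qed

lemma fm_not_m1: assumes "norm z \<le> 1" "z \<noteq> -1" "0 \<le> t" "t \<le> 1" shows "fm z t \<noteq> -1"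
proof
  assume h: "fm z t = -1"
  have rz: "Re z \<ge> -1" using assms(1) abs_Re_le_cmod[of z] by linarith
  have "Re (fm z t) = (1 - t) * Re z + t" by (simp add: fm_def)
  then have e: "(1 - t) * Re z + t = -1" using h by simp
  show False
  proof (cases "t = 0")
    case True then show ?thesis using h assms by (simp add: fm_def)
  next
    case False
    have "(1 - t) * Re z \<ge> (1 - t) * (-1)" using rz assms by (intro mult_left_mono) auto
    then have "t - 1 \<le> -1 - t" using e by (simp add: algebra_simps)
    then show False using False assms by linarith
  qed
qed

lemma fm_dist1: assumes "0 \<le> t" "t \<le> 1" shows "dist (fm z t) 1 \<le> dist z 1"
proof -
  have "fm z t - 1 = (1 - of_real t) * (z - 1)" by (simp add: fm_def algebra_simps)
  then have "dist (fm z t) 1 = norm (1 - of_real t :: complex) * dist z 1"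
    by (simp add: dist_norm norm_mult)
  also have "norm (1 - of_real t :: complex) = 1 - t" using assms
  proof -
    show ?thesis using assms by (simp add: norm_1m)
  qed
  finally show ?thesis using assms by (simp add: mult_left_le_one_le)
qed

lemma fm_dist: assumes "norm z \<le> 1" "0 \<le> t0" "t0 \<le> 1"
  shows "dist (fm z t) (fm z0 t0) \<le> 2 * dist z z0 + 2 * \<bar>t - t0\<bar>"
proof -
  have eq: "fm z t - fm z0 t0 = ((z - z0) + of_real (t - t0) * (1 - z)) + of_real t0 * (z0 - z)"
    by (simp add: fm_def algebra_simps)
  have a: "norm (of_real (t - t0) * (1 - z)) \<le> \<bar>t - t0\<bar> * 2"
  proof -
    have "norm (1 - z) \<le> 2" using norm_triangle_ineq4[of 1 z] assms by simp
    moreover have "norm (of_real (t - t0) :: complex) = \<bar>t - t0\<bar>" by (rule norm_of_real)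
    ultimately show ?thesis by (metis norm_mult mult_left_mono abs_ge_zero)
  qed
  have b: "norm (of_real t0 * (z0 - z)) \<le> norm (z - z0)"
    using assms by (simp add: norm_mult norm_minus_commute mult_left_le_one_le)
  have "norm (fm z t - fm z0 t0) \<le> norm ((z - z0) + of_real (t - t0) * (1 - z)) + norm (of_real t0 * (z0 - z))"
    unfolding eq by (rule norm_triangle_ineq)
  also have "norm ((z - z0) + of_real (t - t0) * (1 - z)) \<le> norm (z - z0) + norm (of_real (t - t0) * (1 - z))"
    by (rule norm_triangle_ineq)
  finally show ?thesis using a b by (simp add: dist_norm)
qed



definition H :: "real \<times> (nat \<times> complex) \<Rightarrow> nat \<times> complex" where
  "H x = disk_map (fst (snd x)) (fm (snd (snd x)) (fst x))"

lemma fm_1: "fm z 1 = 1" by (simp add: fm_def)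
lemma fm_1z: "fm 1 t = 1" by (simp add: fm_def)
lemma fm_0: "fm z 0 = z" by (simp add: fm_def)

lemma X_set_cases:
  assumes "p \<in> X_set"
  obtains "p = X_origin" | n z where "p = (n, z)" "n \<ge> 1" "norm z \<le> 1" "z \<noteq> 1"
  using assms unfolding X_set_def by auto

lemma H_origin: "H (t, X_origin) = X_origin"
  by (simp add: H_def X_origin_def fm_1z disk_map_def)

lemma H_pair: "H (t, (n, z)) = disk_map n (fm z t)"
  by (simp add: H_def)

lemma disk_map_in: "n \<ge> 1 \<Longrightarrow> norm w \<le> 1 \<Longrightarrow> disk_map n w \<in> X_set"
  by (auto simp: disk_map_def X_set_def)

lemma H_top: assumes "t \<in> {0..1}" "p \<in> X_set" shows "H (t, p) \<in> X_set"
  using assms(2)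
proof (cases rule: X_set_cases)
  case 1 then show ?thesis by (simp add: H_origin X_set_def)
next
  case (2 n z) then show ?thesis using assms(1) fm_cball[of z t] by (simp add: H_pair disk_map_in)
qed

lemma crs_openD1: "crs_open U \<Longrightarrow> n \<ge> 1 \<Longrightarrow>
   openin (top_of_set (cball (0::complex) 1)) {z \<in> cball 0 1. disk_map n z \<in> U}"
  unfolding crs_open_def cw_open_def by blast

lemma H_cont: "continuous_map (prod_topology (top_of_set {0..1}) X_crs) X_crs H"
  unfolding continuous_map_def
proof (intro conjI allI impI funcsetI)
  fix x assume "x \<in> topspace (prod_topology (top_of_set {0..1::real}) X_crs)"
  then show "H x \<in> topspace X_crs" using H_top[of "fst x" "snd x"]
    by (auto simp: topspace_crs)
next
  fix U assume "openin X_crs U"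
  then have U: "crs_open U" by (simp add: openin_crs)
  let ?W = "{x \<in> topspace (prod_topology (top_of_set {0..1::real}) X_crs). H x \<in> U}"
  have tW: "?W = {x \<in> {0..1} \<times> X_set. H x \<in> U}" by (simp add: topspace_crs)
  show "openin (prod_topology (top_of_set {0..1::real}) X_crs) ?W"
    unfolding openin_subopen[of _ ?W]
  proof
    fix x assume xW: "x \<in> ?W"
    obtain t0 p0 where x: "x = (t0, p0)" by (cases x)
    have t0: "t0 \<in> {0..1}" and p0: "p0 \<in> X_set" and HU: "H (t0, p0) \<in> U"
      using xW x by (auto simp: topspace_crs)
    show "\<exists>T. openin (prod_topology (top_of_set {0..1}) X_crs) T \<and> x \<in> T \<and> T \<subseteq> ?W"
      using p0
    proof (cases rule: X_set_cases)
      case 1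
      define F where "F = {n::nat. n \<ge> 1 \<and> \<not> (disk_map n ` (cball 0 1 - {-1}) \<subseteq> U)}"
      have oU: "X_origin \<in> U" using HU 1 by (simp add: H_origin)
      then have finF: "finite F" using U unfolding crs_open_def F_def by blast
      have "\<forall>n\<in>F. \<exists>e>0. ball 1 e \<inter> cball 0 1 \<subseteq> {z \<in> cball 0 1. disk_map n z \<in> U}"
      proof
        fix n assume "n \<in> F"
        then have "n \<ge> 1" by (simp add: F_def)
        then have o: "openin (top_of_set (cball (0::complex) 1)) {z \<in> cball 0 1. disk_map n z \<in> U}"
          using crs_openD1[OF U] by blast
        have "(1::complex) \<in> {z \<in> cball 0 1. disk_map n z \<in> U}"
          using oU by (simp add: disk_map_def)
        then show "\<exists>e>0. ball 1 e \<inter> cball 0 1 \<subseteq> {z \<in> cball 0 1. disk_map n z \<in> U}"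
          using o unfolding openin_contains_ball by blast
      qed
      then obtain rr where rr: "\<And>n. n \<in> F \<Longrightarrow> rr n > 0 \<and> ball 1 (rr n) \<inter> cball 0 1 \<subseteq> {z \<in> cball 0 1. disk_map n z \<in> U}"
        by metis
      define r where "r = Min (insert 1 (rr ` F))"
      have r0: "r > 0" unfolding r_def using finF rr by (subst Min_gr_iff) auto
      have rle: "r \<le> rr n" if "n \<in> F" for n unfolding r_def using finF that by (intro Min_le) auto
      define V where "V = insert X_origin {(n, z). n \<ge> 1 \<and> z \<in> cball 0 1 \<and> z \<noteq> 1 \<and>
                              (if n \<in> F then dist 1 z < r else z \<noteq> -1)}"
      have VX: "V \<subseteq> X_set" unfolding V_def X_set_def by auto
      have pre: "{z \<in> cball 0 1. disk_map m z \<in> V} =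
                 cball 0 1 \<inter> (if m \<in> F then ball 1 r else - {-1})" if "m \<ge> 1" for m
        using that r0 by (auto simp: V_def disk_map_def X_origin_def split: if_splits)
      have cwV: "cw_open V" unfolding cw_open_def
      proof (intro conjI allI impI)
        show "V \<subseteq> X_set" by (rule VX)
        fix m :: nat assume m: "m \<ge> 1"
        have "open (if m \<in> F then ball (1::complex) r else - {-1})" by auto
        then show "openin (top_of_set (cball (0::complex) 1)) {z \<in> cball 0 1. disk_map m z \<in> V}"
          unfolding pre[OF m] by (rule openin_open_Int)
      qed
      have "{n::nat. n \<ge> 1 \<and> \<not> (disk_map n ` (cball 0 1 - {-1}) \<subseteq> V)} \<subseteq> F"
        by (auto simp: V_def disk_map_def)
      then have "finite {n::nat. n \<ge> 1 \<and> \<not> (disk_map n ` (cball 0 1 - {-1}) \<subseteq> V)}"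
        using finF finite_subset by blast
      then have "crs_open V" using cwV unfolding crs_open_def by blast
      then have oV: "openin X_crs V" by (simp add: openin_crs)
      have o01: "openin (top_of_set {0..1::real}) {0..1}"
        by (metis openin_topspace topspace_euclidean_subtopology)
      have oT: "openin (prod_topology (top_of_set {0..1}) X_crs) ({0..1} \<times> V)"
        using o01 oV by (simp add: openin_prod_Times_iff)
      have sub: "{0..1} \<times> V \<subseteq> ?W"
      proof
        fix y assume y: "y \<in> {0..1::real} \<times> V"
        obtain t p where yy: "y = (t, p)" by (cases y)
        have t: "t \<in> {0..1}" and p: "p \<in> V" using y yy by auto
        have "H (t, p) \<in> U"
        proof (cases "p = X_origin")
          case True then show ?thesis using oU by (simp add: H_origin)
        next
          case False
          then obtain n z where pz: "p = (n, z)" "n \<ge> 1" "z \<in> cball 0 1" "z \<noteq> 1"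
            and c: "if n \<in> F then dist 1 z < r else z \<noteq> -1"
            using p unfolding V_def by auto
          have wc: "norm (fm z t) \<le> 1" using fm_cball[of z t] pz t by simp
          show ?thesis
          proof (cases "n \<in> F")
            case True
            then have "dist 1 z < r" using c by simp
            moreover have "dist (fm z t) 1 \<le> dist z 1" using fm_dist1 t by simp
            ultimately have "dist 1 (fm z t) < rr n" using rle[OF True] by (simp add: dist_commute)
            then have "fm z t \<in> ball 1 (rr n) \<inter> cball 0 1" using wc by simp
            then show ?thesis using rr[OF True] pz by (auto simp: H_pair)
          next
            case False
            then have "z \<noteq> -1" using c by simp
            then have "fm z t \<noteq> -1" using fm_not_m1[of z t] pz t by simp
            then have "fm z t \<in> cball 0 1 - {-1}" using wc by simp
            moreover have "disk_map n ` (cball 0 1 - {-1}) \<subseteq> U" using False pz unfolding F_def by blast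
            ultimately show ?thesis using pz by (auto simp: H_pair)
          qed
        qed
        then show "y \<in> ?W" using yy t p VX by (auto simp: topspace_crs)
      qed
      have "x \<in> {0..1} \<times> V" using x t0 1 by (simp add: V_def)
      then show ?thesis using oT sub by blast
    next
      case (2 n z0)
      define w0 where "w0 = fm z0 t0"
      have "H (t0, p0) = disk_map n w0" using 2 by (simp add: H_pair w0_def)
      then have w0U: "w0 \<in> {z \<in> cball 0 1. disk_map n z \<in> U}"
        using HU fm_cball[of z0 t0] 2 t0 by (simp add: w0_def)
      have "openin (top_of_set (cball (0::complex) 1)) {z \<in> cball 0 1. disk_map n z \<in> U}"
        using crs_openD1[OF U] 2 by blast
      then obtain e where e: "e > 0" "ball w0 e \<inter> cball 0 1 \<subseteq> {z \<in> cball 0 1. disk_map n z \<in> U}"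
        using w0U unfolding openin_contains_ball by blast
      define d where "d = min (e/4) (dist z0 1)"
      have d0: "d > 0" using e 2 by (simp add: d_def)
      define V where "V = Pair n ` (ball z0 d \<inter> cball 0 1)"
      have not1: "z \<noteq> 1" if "z \<in> ball z0 d" for z
        using that d_def by auto
      have n1: "\<not> dist z0 1 < d" using d_def by simp
      have VX: "V \<subseteq> X_set" using n1 2 unfolding V_def X_set_def by auto
      have pre: "{z \<in> cball 0 1. disk_map m z \<in> V} =
                 cball 0 1 \<inter> (if m = n then ball z0 d else {})" if "m \<ge> 1" for m
      proof -
        show ?thesis using that 2 not1 n1 by (auto simp: V_def disk_map_def X_origin_def)
      qed
      have cwV: "cw_open V" unfolding cw_open_def
      proof (intro conjI allI impI)
        show "V \<subseteq> X_set" by (rule VX)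
        fix m :: nat assume m: "m \<ge> 1"
        have "open (if m = n then ball z0 d else {})" by auto
        then show "openin (top_of_set (cball (0::complex) 1)) {z \<in> cball 0 1. disk_map m z \<in> V}"
          unfolding pre[OF m] by (rule openin_open_Int)
      qed
      have "X_origin \<notin> V" using 2 by (auto simp: V_def X_origin_def)
      then have "crs_open V" using cwV unfolding crs_open_def by blast
      then have oV: "openin X_crs V" by (simp add: openin_crs)
      have o01: "openin (top_of_set {0..1::real}) ({0..1} \<inter> ball t0 d)"
        by (rule openin_open_Int) simp
      have oT: "openin (prod_topology (top_of_set {0..1}) X_crs) (({0..1} \<inter> ball t0 d) \<times> V)"
        using o01 oV by (simp add: openin_prod_Times_iff)
      have sub: "({0..1} \<inter> ball t0 d) \<times> V \<subseteq> ?W"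
      proof
        fix y assume y: "y \<in> ({0..1::real} \<inter> ball t0 d) \<times> V"
        then obtain t z where yy: "y = (t, (n, z))" and t: "t \<in> {0..1}" "dist t0 t < d"
          and z: "dist z0 z < d" "norm z \<le> 1"
          unfolding V_def by auto
        have wc: "norm (fm z t) \<le> 1" using fm_cball[of z t] z t by simp
        have "dist (fm z t) (fm z0 t0) \<le> 2 * dist z z0 + 2 * \<bar>t - t0\<bar>"
          using fm_dist[of z t0 t z0] z t0 by simp
        moreover have "dist z z0 < e/4" using z d_def by (simp add: dist_commute)
        moreover have "\<bar>t - t0\<bar> < e/4" using t d_def by (simp add: dist_real_def abs_minus_commute)
        ultimately have "dist w0 (fm z t) < e" unfolding w0_def by (simp add: dist_commute)
        then have "fm z t \<in> ball w0 e \<inter> cball 0 1" using wc by simp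
        then have "H y \<in> U" using e(2) yy by (auto simp: H_pair)
        moreover have "y \<in> {0..1} \<times> X_set" using y VX by auto
        ultimately show "y \<in> ?W" by (simp add: topspace_crs)
      qed
      have "z0 \<in> ball z0 d \<inter> cball 0 1" using d0 2 by simp
      then have "x \<in> ({0..1} \<inter> ball t0 d) \<times> V" using x t0 d0 2 by (auto simp: V_def)
      then show ?thesis using oT sub by blast
    qed
  qed
qed

theorem proposition3p2:
  shows "contractible_space X_crs"
  unfolding contractible_space_def
proof (intro exI)
  show "homotopic_with (\<lambda>x. True) X_crs X_crs id (\<lambda>x. X_origin)"
    unfolding homotopic_with[where P="\<lambda>x. True", simplified]
  proof (intro exI conjI ballI)
    show "continuous_map (prod_topology (top_of_set {0..1}) X_crs) X_crs H" by (rule H_cont)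
  next
    fix x assume "x \<in> topspace X_crs"
    then have "x \<in> X_set" by (simp add: topspace_crs)
    then show "H (0, x) = id x"
    proof (cases rule: X_set_cases)
      case 1 then show ?thesis by (simp add: H_origin)
    next
      case (2 n z) then show ?thesis by (simp add: H_pair fm_0 disk_map_def)
    qed
  next
    fix x assume "x \<in> topspace X_crs"
    show "H (1, x) = X_origin" by (simp add: H_def fm_1 disk_map_def)
  qed
qed

end
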